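(* Let $\mathcal X$ be a finite set, let $M:=\log|\mathcal X|$, let $\mathcal C$ be any set of probability measures on $(\mathcal X^\infty,\mathcal F)$, and let $\rho$ be any probability measure on $(\mathcal X^\infty,\mathcal F)$. Then there exists a discrete Bayesian predictor $\nu$, that is, a probability measure of the form $\nu=\sum_{k\in\mathbb N} w_k\mu_k$ with $\mu_k\in\mathcal C$ and $w_k\in[0,1]$, such that for every $\mu\in\mathcal C$ and every time step $n$, $$L_n(\mu,\nu)-L_n(\mu,\rho)\le 8\log n+O(\log\log n),$$ where the $O(\log\log n)$ term does not depend on $\mu$ or on $\mathcal C$ and $\rho$; its constants are explicit, depend on the alphabet only linearly through $M$ (a term of order $M\log\log n$), and are otherwise universal constants.
   Context: $\mathcal X$ is a finite alphabet; $x_{1..n}$ denotes $x_1,\dots,x_n$; $\mathcal F$ is the Borel sigma-field on $\mathcal X^\infty$. For a measure $\mu$ on $\mathcal X^\infty$, $\mu(x_{1..n})$ denotes the probability that the first $n$ symbols equal $x_{1..n}$. Logarithms are base 2. For two probability measures $\mu,\rho$ on $(\mathcal X^\infty,\mathcal F)$, the expected cumulative Kullback–Leibler divergence (log loss) up to time $n$ is $$L_n(\mu,\rho):=\mathbb E_\mu\sum_{t=1}^{n}\sum_{a\in\mathcal X}\mu(x_t=a\mid x_{1..t-1})\log\frac{\mu(x_t=a\mid x_{1..t-1})}{\rho(x_t=a\mid x_{1..t-1})}=\sum_{x_{1..n}\in\mathcal X^n}\mu(x_{1..n})\log\frac{\mu(x_{1..n})}{\rho(x_{1..n})},$$ where $\mu$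 is interpreted as the measure generating the data and $\rho$ as the predictor. *)

theory Defs
  imports "HOL-Probability.Probability"
begin

text \<open>Infinite sequences over the alphabet X are streams in streams X, with the
  Borel (product) sigma-field stream_space (count_space X).\<close>

definition seqprob :: "'a stream measure \<Rightarrow> 'a list \<Rightarrow> real" where
  "seqprob \<mu> xs = measure \<mu> {\<omega> \<in> space \<mu>. stake (length xs) \<omega> = xs}"

definition kl_term :: "real \<Rightarrow> real \<Rightarrow> ereal" where
  "kl_term p q = (if p = 0 then 0 else if q = 0 then \<infinity> else ereal (p * log 2 (p / q)))"

text \<open>Expected cumulative KL divergence L_n(mu, rho) over alphabet X.\<close>
definition logloss :: "'a set \<Rightarrow> nat \<Rightarrow> 'a stream measure \<Rightarrow> 'a stream measure \<Rightarrow> ereal" where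
  "logloss X n \<mu> \<rho> =
     (\<Sum>xs\<in>{xs. set xs \<subseteq> X \<and> length xs = n}. kl_term (seqprob \<mu> xs) (seqprob \<rho> xs))"

definition seq_prob_measure :: "'a set \<Rightarrow> 'a stream measure \<Rightarrow> bool" where
  "seq_prob_measure X \<mu> \<longleftrightarrow> prob_space \<mu> \<and> sets \<mu> = sets (stream_space (count_space X))"

definition discrete_bayes :: "'a set \<Rightarrow> 'a stream measure set \<Rightarrow> 'a stream measure \<Rightarrow> bool" where
  "discrete_bayes X C \<nu> \<longleftrightarrow> seq_prob_measure X \<nu> \<and>
     (\<exists>w :: nat \<Rightarrow> real. \<exists>\<mu>s :: nat \<Rightarrow> 'a stream measure.
        (\<forall>k. \<mu>s k \<in> C) \<and> (\<forall>k. 0 \<le> w k \<and> w k \<le> 1) \<and>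
        (\<forall>A \<in> sets \<nu>. emeasure \<nu> A = (\<Sum>k. ennreal (w k) * emeasure (\<mu>s k) A)))"

end

theory Submission
  imports Defs
begin


definition isMix :: "'m set \<Rightarrow> ('m \<Rightarrow> 's \<Rightarrow> real) \<Rightarrow> ('s \<Rightarrow> real) \<Rightarrow> bool" where
  "isMix C \<phi> \<nu> \<longleftrightarrow> (\<exists>m::nat. \<exists>c g. (\<forall>j<m. g j \<in> C \<and> 0 \<le> c j) \<and> (\<Sum>j<m. c j) = (1::real) \<and>
        \<nu> = (\<lambda>x. \<Sum>j<m. c j * \<phi> (g j) x))"

lemma isMixE:
  assumes "isMix C \<phi> \<nu>"
  obtains m :: nat and c g where "\<forall>j<m. g j \<in> C \<and> 0 \<le> c j" "(\<Sum>j<m. c j) = 1" "\<nu> = (\<lambda>x. \<Sum>j<m. c j * \<phi> (g j) x)"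
  using assms unfolding isMix_def by blast

lemma isMix1: "\<mu> \<in> C \<Longrightarrow> isMix C \<phi> (\<phi> \<mu>)"
  unfolding isMix_def
  by (rule exI[of _ "1::nat"], rule exI[of _ "\<lambda>_::nat. 1::real"], rule exI[of _ "\<lambda>_::nat. \<mu>"]) auto

lemma isMix2:
  assumes mx: "isMix C \<phi> \<nu>" and \<mu>: "\<mu>\<in>C" and t: "0\<le>t" "t\<le>1"
  shows "isMix C \<phi> (\<lambda>x. (1-t) * \<nu> x + t * \<phi> \<mu> x)"
proof -
  obtain m :: nat and c g where mcg: "\<forall>j<m. g j \<in> C \<and> 0 \<le> c j" "(\<Sum>j<m. c j) = 1" "\<nu> = (\<lambda>x. \<Sum>j<m. c j * \<phi> (g j) x)"
    using mx by (rule isMixE)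
  define c' where "c' j = (if j < m then (1-t) * c j else t)" for j
  define g' where "g' = g(m := \<mu>)"
  have "(\<Sum>j<Suc m. c' j) = (1-t) * (\<Sum>j<m. c j) + t"
    by (simp add: c'_def sum_distrib_left)
  moreover have "(\<Sum>j<Suc m. c' j * \<phi> (g' j) x) = (1-t) * \<nu> x + t * \<phi> \<mu> x" for x
  proof -
    have "(\<Sum>j<Suc m. c' j * \<phi> (g' j) x) = (\<Sum>j<m. c' j * \<phi> (g' j) x) + c' m * \<phi> (g' m) x"
      by (rule sum.lessThan_Suc)
    also have "(\<Sum>j<m. c' j * \<phi> (g' j) x) = (\<Sum>j<m. (1-t) * (c j * \<phi> (g j) x))"
      by (rule sum.cong) (auto simp: c'_def g'_def)
    also have "\<dots> = (1-t) * \<nu> x" by (simp only: mcg(3) sum_distrib_left)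
    also have "c' m * \<phi> (g' m) x = t * \<phi> \<mu> x" by (simp add: c'_def g'_def)
    finally show ?thesis .
  qed
  moreover have "\<forall>j<Suc m. g' j \<in> C \<and> 0 \<le> c' j" using mcg(1) \<mu> t by (auto simp: c'_def g'_def less_Suc_eq)
  ultimately show ?thesis unfolding isMix_def using mcg(2)
    by (intro exI[of _ "Suc m"] exI[of _ c'] exI[of _ g']) auto
qed

lemma ln_lower: fixes u :: real assumes "\<bar>u\<bar> \<le> 1/2" shows "ln (1 + u) \<ge> u - 2 * u^2"
  using abs_ln_one_plus_x_minus_x_bound[OF assms] by linarith

lemma ln32: "ln (3/2::real) \<ge> 1/3"
proof -
  have "ln (2/3::real) \<le> 2/3 - 1" by (rule ln_le_minus_one) auto
  moreover have "ln (2/3::real) = - ln (3/2)" by (simp add: ln_div)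
  ultimately show ?thesis by simp
qed

lemma mixture_exists:
  fixes S :: "'s set" and C :: "'m set" and \<phi> :: "'m \<Rightarrow> 's \<Rightarrow> real" and \<rho> :: "'s \<Rightarrow> real"
  assumes finS: "finite S" and Cne: "C \<noteq> {}"
  and \<phi>nn: "\<And>\<mu> x. \<mu>\<in>C \<Longrightarrow> x\<in>S \<Longrightarrow> 0 \<le> \<phi> \<mu> x" and \<phi>sum: "\<And>\<mu>. \<mu>\<in>C \<Longrightarrow> (\<Sum>x\<in>S. \<phi> \<mu> x) = 1"
  and \<rho>nn: "\<And>x. x\<in>S \<Longrightarrow> 0 \<le> \<rho> x" and \<rho>sum: "(\<Sum>x\<in>S. \<rho> x) \<le> 1"
  shows "\<exists>m::nat. \<exists>c g. (\<forall>j<m. g j \<in> C \<and> 0 \<le> c j) \<and> (\<Sum>j<m. c j) = 1 \<and>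
     (\<forall>\<mu>\<in>C. \<forall>x\<in>S. \<phi> \<mu> x > 0 \<and> \<rho> x > 0 \<longrightarrow> (\<Sum>j<m. c j * \<phi> (g j) x) > 0) \<and>
     (\<forall>\<mu>\<in>C. (\<forall>x\<in>S. \<phi> \<mu> x > 0 \<longrightarrow> \<rho> x > 0) \<longrightarrow>
        (\<Sum>x\<in>{x\<in>S. \<phi> \<mu> x > 0}. \<phi> \<mu> x * ln (\<rho> x / (\<Sum>j<m. c j * \<phi> (g j) x))) \<le> ln 7)"
proof -
  define P where "P = {x\<in>S. \<rho> x > 0 \<and> (\<exists>\<mu>\<in>C. \<phi> \<mu> x > 0)}"
  have finP: "finite P" using finS unfolding P_def by auto
  have \<phi>le1: "\<phi> \<mu> x \<le> 1" if "\<mu>\<in>C" "x\<in>S" for \<mu> x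
  proof -
    have "\<phi> \<mu> x \<le> (\<Sum>x\<in>S. \<phi> \<mu> x)" by (rule member_le_sum) (use that \<phi>nn finS in auto)
    thus ?thesis using \<phi>sum[OF that(1)] by simp
  qed
  have M1: "isMix C \<phi> (\<phi> \<mu>)" if "\<mu>\<in>C" for \<mu> using isMix1[OF that] .
  have M2: "isMix C \<phi> (\<lambda>x. (1-t) * \<nu> x + t * \<phi> \<mu> x)" if "isMix C \<phi> \<nu>" "\<mu>\<in>C" "0\<le>t" "t\<le>1" for \<nu> \<mu> t
    using isMix2[OF that] .
  have M3: "0 \<le> \<nu> x \<and> \<nu> x \<le> 1" if mx: "isMix C \<phi> \<nu>" "x\<in>S" for \<nu> x
  proof -
    obtain m :: nat and c g where mcg: "\<forall>j<m. g j \<in> C \<and> 0 \<le> c j" "(\<Sum>j<m. c j) = 1" "\<nu> = (\<lambda>x. \<Sum>j<m. c j * \<phi> (g j) x)"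
      using mx(1) by (rule isMixE)
    have "\<nu> x \<le> (\<Sum>j<m. c j * 1)" unfolding mcg(3)
      by (rule sum_mono, rule mult_left_mono) (use mcg(1) \<phi>le1 that in auto)
    moreover have "0 \<le> \<nu> x" unfolding mcg(3) by (rule sum_nonneg) (use mcg(1) \<phi>nn that in auto)
    ultimately show ?thesis using mcg(2) by simp
  qed
  have main: "\<exists>\<nu>. isMix C \<phi> \<nu> \<and> (\<forall>x\<in>P. \<nu> x > 0) \<and>
     (\<forall>\<mu>\<in>C. (\<forall>x\<in>S. \<phi> \<mu> x > 0 \<longrightarrow> \<rho> x > 0) \<longrightarrow>
        (\<Sum>x\<in>{x\<in>S. \<phi> \<mu> x > 0}. \<phi> \<mu> x * ln (\<rho> x / \<nu> x)) \<le> ln 7)"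
  proof (cases "P = {}")
    case True
    obtain \<mu>0 where "\<mu>0 \<in> C" using Cne by auto
    have "{x\<in>S. \<phi> \<mu> x > 0} = {}" if "\<mu>\<in>C" "\<forall>x\<in>S. \<phi> \<mu> x > 0 \<longrightarrow> \<rho> x > 0" for \<mu>
      using True that unfolding P_def by auto
    note E = this
    show ?thesis
    proof (intro exI[of _ "\<phi> \<mu>0"] conjI ballI impI)
      show "isMix C \<phi> (\<phi> \<mu>0)" using M1[OF \<open>\<mu>0\<in>C\<close>] .
      show "\<And>x. x \<in> P \<Longrightarrow> 0 < \<phi> \<mu>0 x" using True by auto
      fix \<mu> assume "\<mu>\<in>C" "\<forall>x\<in>S. 0 < \<phi> \<mu> x \<longrightarrow> 0 < \<rho> x"
      then have "{x\<in>S. \<phi> \<mu> x > 0} = {}" by (rule E)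
      then show "(\<Sum>x\<in>{x\<in>S. 0 < \<phi> \<mu> x}. \<phi> \<mu> x * ln (\<rho> x / \<phi> \<mu>0 x)) \<le> ln 7"
        by (simp only: sum.empty) simp
    qed
  next

    case False
    define Pos where "Pos = {\<nu>. isMix C \<phi> \<nu> \<and> (\<forall>x\<in>P. \<nu> x > 0)}"
    have Qex: "Q \<subseteq> P \<Longrightarrow> \<exists>\<nu>. isMix C \<phi> \<nu> \<and> (\<forall>x\<in>Q. \<nu> x > 0)" if "finite Q" for Q
      using that
    proof (induction Q rule: finite_induct)
      case empty
      obtain \<mu>0 where "\<mu>0 \<in> C" using Cne by auto
      then show ?case using M1 by blast
    next
      case (insert x Q)
      then obtain \<nu>' where \<nu>': "isMix C \<phi> \<nu>'" "\<forall>y\<in>Q. \<nu>' y > 0" by auto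
      from insert.prems have "x \<in> P" by auto
      then obtain \<mu> where \<mu>: "\<mu>\<in>C" "\<phi> \<mu> x > 0" "x \<in> S" unfolding P_def by auto
      have "isMix C \<phi> (\<lambda>y. (1-1/2) * \<nu>' y + 1/2 * \<phi> \<mu> y)" by (rule M2) (use \<nu>' \<mu> in auto)
      moreover have "\<forall>y\<in>insert x Q. (1-1/2) * \<nu>' y + 1/2 * \<phi> \<mu> y > 0"
      proof
        fix y assume y: "y \<in> insert x Q"
        hence yS: "y \<in> S" using insert.prems unfolding P_def by auto
        show "(1-1/2) * \<nu>' y + 1/2 * \<phi> \<mu> y > 0"
        proof (cases "y = x")
          case True
          thus ?thesis using M3[OF \<nu>'(1) yS] \<mu> by auto
        next
          case False
          thus ?thesis using y \<nu>'(2) \<phi>nn[OF \<mu>(1) yS] by auto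
        qed
      qed
      ultimately show ?case by blast
    qed
    have PosNE: "Pos \<noteq> {}" using Qex[OF finP] unfolding Pos_def by auto
    define G where "G \<nu> = (\<Sum>x\<in>P. \<rho> x * ln (\<nu> x))" for \<nu>
    have PS: "P \<subseteq> S" unfolding P_def by auto
    have Gle: "G \<nu> \<le> 0" if "\<nu> \<in> Pos" for \<nu>
      unfolding G_def
    proof (rule sum_nonpos)
      fix x assume x: "x \<in> P"
      have "\<nu> x > 0" "\<nu> x \<le> 1" using that x M3[of \<nu> x] PS unfolding Pos_def by auto
      hence "ln (\<nu> x) \<le> 0" by simp
      moreover have "\<rho> x \<ge> 0" using x PS \<rho>nn by auto
      ultimately show "\<rho> x * ln (\<nu> x) \<le> 0" by (simp add: mult_nonneg_nonpos)
    qed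
    have bdd: "bdd_above (G ` Pos)" using Gle by (intro bdd_aboveI[of _ 0]) auto
    define gs where "gs = Sup (G ` Pos)"
    define \<rho>min where "\<rho>min = Min (\<rho> ` P)"
    have \<rho>minpos: "\<rho>min > 0" unfolding \<rho>min_def using finP False by (subst Min_gr_iff) (auto simp: P_def)
    have \<rho>minle: "\<rho>min \<le> \<rho> x" if "x \<in> P" for x unfolding \<rho>min_def using finP that by auto
    have \<rho>P: "(\<Sum>x\<in>P. \<rho> x) \<le> 1"
    proof -
      have "(\<Sum>x\<in>P. \<rho> x) \<le> (\<Sum>x\<in>S. \<rho> x)" by (rule sum_mono2) (use finS PS \<rho>nn in auto)
      thus ?thesis using \<rho>sum by simp
    qed
    define \<delta> where "\<delta> = \<rho>min / 32"
    have "gs - \<delta> < gs" using \<rho>minpos by (simp add: \<delta>_def)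
    then obtain \<nu> where \<nu>: "\<nu> \<in> Pos" "gs - \<delta> < G \<nu>"
      unfolding gs_def using less_cSup_iff[of "G ` Pos", OF _ bdd] PosNE by auto
    have \<nu>pos: "\<nu> x > 0" if "x\<in>P" for x using \<nu>(1) that unfolding Pos_def by auto
    have KEY: "(\<Sum>x\<in>P. \<rho> x * ln (1 - t + t * (\<phi> \<mu> x / \<nu> x))) < \<delta>"
      if \<mu>: "\<mu>\<in>C" and t: "0 < t" "t \<le> 1/2" for \<mu> t
    proof -
      define \<nu>t where "\<nu>t = (\<lambda>x. (1-t) * \<nu> x + t * \<phi> \<mu> x)"
      have \<nu>tpos: "\<nu>t x > 0" if "x \<in> P" for x
      proof -
        have "(1-t) * \<nu> x > 0" using t \<nu>pos[OF that] by auto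
        moreover have "t * \<phi> \<mu> x \<ge> 0" using t \<phi>nn[OF \<mu>] that PS by auto
        ultimately show ?thesis unfolding \<nu>t_def by linarith
      qed
      have "\<nu>t \<in> Pos" unfolding Pos_def \<nu>t_def using M2[of \<nu> \<mu> t] \<nu>(1) \<mu> t \<nu>tpos
        unfolding Pos_def \<nu>t_def by auto
      hence "G \<nu>t \<le> gs" unfolding gs_def using bdd by (intro cSup_upper) auto
      moreover have "G \<nu>t - G \<nu> = (\<Sum>x\<in>P. \<rho> x * ln (1 - t + t * (\<phi> \<mu> x / \<nu> x)))"
        unfolding G_def sum_subtractf[symmetric]
      proof (rule sum.cong[OF refl])
        fix x assume x: "x \<in> P"
        have "1 - t + t * (\<phi> \<mu> x / \<nu> x) = \<nu>t x / \<nu> x"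
          using \<nu>pos[OF x] unfolding \<nu>t_def by (simp add: field_simps)
        hence h: "ln (1 - t + t * (\<phi> \<mu> x / \<nu> x)) = ln (\<nu>t x) - ln (\<nu> x)"
          using \<nu>pos[OF x] \<nu>tpos[OF x] by (simp add: ln_div)
        show "\<rho> x * ln (\<nu>t x) - \<rho> x * ln (\<nu> x) = \<rho> x * ln (1 - t + t * (\<phi> \<mu> x / \<nu> x))"
          unfolding h by (simp add: right_diff_distrib)
      qed
      ultimately show ?thesis using \<nu>(2) by linarith
    qed
    have BND: "\<phi> \<mu> x0 / \<nu> x0 \<le> 12 / \<rho>min" if \<mu>: "\<mu>\<in>C" and x0: "x0 \<in> P" for \<mu> x0
    proof (rule ccontr)
      assume nt: "\<not> ?thesis"
      define R where "R = \<phi> \<mu> x0 / \<nu> x0"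
      have R: "R > 12 / \<rho>min" using nt R_def by auto
      have \<rho>min1: "\<rho>min \<le> 1" using \<rho>minle[OF x0] member_le_sum[of x0 P \<rho>] finP x0 \<rho>nn PS \<rho>P by force
      have "12 / \<rho>min \<ge> 12" using \<rho>minpos \<rho>min1 by (simp add: field_simps)
      hence R12: "R > 12" using R by linarith
      define t where "t = 1 / R"
      have t: "0 < t" "t \<le> 1/2" using R12 by (auto simp: t_def field_simps)
      have "2 * t < \<rho>min / 6" using R \<rho>minpos R12 unfolding t_def by (simp add: field_simps)
      have term0: "\<rho> x0 * ln (1 - t + t * (\<phi> \<mu> x0 / \<nu> x0)) \<ge> \<rho>min / 3"
      proof -
        have "1 - t + t * (\<phi> \<mu> x0 / \<nu> x0) = 2 - t" using R12 by (simp add: t_def R_def[symmetric])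
        also have "\<dots> \<ge> 3/2" using t by simp
        finally have ge: "1 - t + t * (\<phi> \<mu> x0 / \<nu> x0) \<ge> 3/2" .
        have "ln (1 - t + t * (\<phi> \<mu> x0 / \<nu> x0)) \<ge> ln (3/2)"
          using ge by (subst ln_le_cancel_iff) (linarith, linarith, linarith)
        hence "ln (1 - t + t * (\<phi> \<mu> x0 / \<nu> x0)) \<ge> 1/3" using ln32 by linarith
        moreover have "\<rho> x0 \<ge> \<rho>min" by (rule \<rho>minle[OF x0])
        ultimately have "\<rho>min * (1/3) \<le> \<rho> x0 * ln (1 - t + t * (\<phi> \<mu> x0 / \<nu> x0))"
          using \<rho>minpos by (intro mult_mono) auto
        thus ?thesis by simp
      qed
      have others: "\<rho> x * ln (1 - t + t * (\<phi> \<mu> x / \<nu> x)) \<ge> \<rho> x * (-2 * t)" if x: "x \<in> P" for x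
      proof -
        have r0: "\<phi> \<mu> x / \<nu> x \<ge> 0" using \<phi>nn[OF \<mu>] x PS \<nu>pos[OF x] by auto
        have "ln (1 + (-t)) \<ge> (-t) - 2 * (-t)^2" by (rule ln_lower) (use t in auto)
        moreover have "2 * t^2 \<le> t" using t by (simp add: power2_eq_square)
        ultimately have "ln (1 - t) \<ge> -2 * t" by simp
        moreover have "ln (1 - t + t * (\<phi> \<mu> x / \<nu> x)) \<ge> ln (1 - t)"
          using t mult_nonneg_nonneg[OF _ r0, of t] by (subst ln_le_cancel_iff) (linarith+)
        ultimately show ?thesis using \<rho>nn x PS by (intro mult_left_mono) auto
      qed
      have "(\<Sum>x\<in>P. \<rho> x * ln (1 - t + t * (\<phi> \<mu> x / \<nu> x))) =
            \<rho> x0 * ln (1 - t + t * (\<phi> \<mu> x0 / \<nu> x0)) + (\<Sum>x\<in>P-{x0}. \<rho> x * ln (1 - t + t * (\<phi> \<mu> x / \<nu> x)))"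
        using finP x0 by (simp add: sum.remove)
      moreover have "(\<Sum>x\<in>P-{x0}. \<rho> x * ln (1 - t + t * (\<phi> \<mu> x / \<nu> x))) \<ge> (\<Sum>x\<in>P-{x0}. \<rho> x * (-2 * t))"
        by (rule sum_mono) (use others in auto)
      moreover have "(\<Sum>x\<in>P-{x0}. \<rho> x * (-2 * t)) = - 2 * t * (\<Sum>x\<in>P-{x0}. \<rho> x)"
        by (simp add: sum_distrib_left sum_distrib_right algebra_simps)
      moreover have "(\<Sum>x\<in>P-{x0}. \<rho> x) \<le> 1"
        using \<rho>P sum_mono2[of P "P-{x0}" \<rho>] finP \<rho>nn PS by force
      ultimately have "(\<Sum>x\<in>P. \<rho> x * ln (1 - t + t * (\<phi> \<mu> x / \<nu> x))) \<ge> \<rho>min / 3 - 2 * t"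
        using term0 t mult_left_le[of "\<Sum>x\<in>P-{x0}. \<rho> x" "2*t"] by linarith
      moreover have "\<delta> < \<rho>min / 3 - 2 * t" using \<open>2 * t < \<rho>min / 6\<close> \<rho>minpos unfolding \<delta>_def by simp
      ultimately show False using KEY[OF \<mu> t] by linarith
    qed
    have SUMB: "(\<Sum>x\<in>P. \<rho> x * (\<phi> \<mu> x / \<nu> x)) \<le> 6" if \<mu>: "\<mu>\<in>C" for \<mu>
    proof -
      define t where "t = \<rho>min / 48"
      have \<rho>min1: "\<rho>min \<le> 1"
        using False \<rho>minle member_le_sum[of _ P \<rho>] finP \<rho>nn PS \<rho>P by fastforce
      have t: "0 < t" "t \<le> 1/2" using \<rho>minpos \<rho>min1 by (auto simp: t_def)
      have each: "\<rho> x * ln (1 - t + t * (\<phi> \<mu> x / \<nu> x)) \<ge> \<rho> x * (t/2 * (\<phi> \<mu> x / \<nu> x) - 3*t/2)" if x: "x \<in> P" for x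
      proof -
        define r where "r = \<phi> \<mu> x / \<nu> x"
        have r0: "r \<ge> 0" using \<phi>nn[OF \<mu>] x PS \<nu>pos[OF x] by (auto simp: r_def)
        have rle: "r \<le> 12 / \<rho>min" using BND[OF \<mu> x] r_def by simp
        have tr: "t * r \<le> 1/4" using rle \<rho>minpos r0 unfolding t_def by (simp add: field_simps)
        define u where "u = t * (r - 1)"
        have t4: "t \<le> 1/4" using \<rho>min1 \<rho>minpos by (simp add: t_def)
        have ueq: "u = t*r - t" unfolding u_def by (simp add: algebra_simps)
        have tr0: "0 \<le> t * r" using t r0 by simp
        have u: "\<bar>u\<bar> \<le> 1/4" unfolding abs_le_iff using ueq tr t t4 tr0 by linarith
        have ua: "\<bar>u\<bar> \<le> t * r + t" unfolding abs_le_iff using ueq t tr0 by linarith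
        have "ln (1 + u) \<ge> u - 2 * u^2" by (rule ln_lower) (use u in auto)
        moreover have "2 * u^2 \<le> (1/2) * \<bar>u\<bar>"
        proof -
          have "u^2 = \<bar>u\<bar> * \<bar>u\<bar>" by (simp add: power2_eq_square abs_mult_self_eq)
          moreover have "\<bar>u\<bar> * \<bar>u\<bar> \<le> \<bar>u\<bar> * (1/4)" using u by (intro mult_left_mono) auto
          ultimately show ?thesis by linarith
        qed
        ultimately have "ln (1 + u) \<ge> t/2 * r - 3*t/2" using ua unfolding u_def by (simp add: algebra_simps)
        moreover have "1 + u = 1 - t + t * r" unfolding u_def by (simp add: algebra_simps)
        ultimately show ?thesis using \<rho>nn x PS unfolding r_def by (intro mult_left_mono) auto
      qed
      have "(\<Sum>x\<in>P. \<rho> x * (t/2 * (\<phi> \<mu> x / \<nu> x) - 3*t/2)) \<le> (\<Sum>x\<in>P. \<rho> x * ln (1 - t + t * (\<phi> \<mu> x / \<nu> x)))"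
        by (rule sum_mono) (use each in auto)
      also have "\<dots> < \<delta>" by (rule KEY[OF \<mu> t])
      finally have A: "(\<Sum>x\<in>P. \<rho> x * (t/2 * (\<phi> \<mu> x / \<nu> x) - 3*t/2)) < \<delta>" .
      have "(\<Sum>x\<in>P. \<rho> x * (t/2 * (\<phi> \<mu> x / \<nu> x) - 3*t/2)) =
            t/2 * (\<Sum>x\<in>P. \<rho> x * (\<phi> \<mu> x / \<nu> x)) - 3*t/2 * (\<Sum>x\<in>P. \<rho> x)"
      proof -
        have "(\<Sum>x\<in>P. \<rho> x * (t/2 * (\<phi> \<mu> x / \<nu> x) - 3*t/2)) =
            (\<Sum>x\<in>P. t/2 * (\<rho> x * (\<phi> \<mu> x / \<nu> x)) - 3*t/2 * \<rho> x)"
          by (rule sum.cong) (auto simp: algebra_simps)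
        also have "\<dots> = t/2 * (\<Sum>x\<in>P. \<rho> x * (\<phi> \<mu> x / \<nu> x)) - 3*t/2 * (\<Sum>x\<in>P. \<rho> x)"
          by (simp only: sum_subtractf sum_distrib_left)
        finally show ?thesis .
      qed
      with A have "t/2 * (\<Sum>x\<in>P. \<rho> x * (\<phi> \<mu> x / \<nu> x)) < \<delta> + 3*t/2"
        using \<rho>P t mult_left_le[of "\<Sum>x\<in>P. \<rho> x" "3*t/2"] by linarith
      hence "t/2 * (\<Sum>x\<in>P. \<rho> x * (\<phi> \<mu> x / \<nu> x)) < t/2 * 6"
        using \<rho>minpos unfolding \<delta>_def t_def by simp
      thus ?thesis using t by simp
    qed
    show ?thesis
    proof (intro exI conjI ballI impI)
      show "isMix C \<phi> \<nu>" using \<nu>(1) unfolding Pos_def by auto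
      show "\<And>x. x \<in> P \<Longrightarrow> 0 < \<nu> x" by (rule \<nu>pos)
      fix \<mu> assume \<mu>: "\<mu> \<in> C" and prem: "\<forall>x\<in>S. 0 < \<phi> \<mu> x \<longrightarrow> 0 < \<rho> x"
      define Q where "Q = {x\<in>S. 0 < \<phi> \<mu> x}"
      have QP: "Q \<subseteq> P" using prem \<mu> unfolding Q_def P_def by auto
      have finQ: "finite Q" using finS unfolding Q_def by auto
      have each: "\<phi> \<mu> x * ln (\<rho> x / \<nu> x) \<le> \<phi> \<mu> x * (ln 7 - 1) + (1/7) * (\<rho> x * (\<phi> \<mu> x / \<nu> x))"
        if x: "x \<in> Q" for x
      proof -
        have xP: "x \<in> P" using x QP by auto
        have pos: "\<rho> x > 0" "\<nu> x > 0" "\<phi> \<mu> x > 0" using xP \<nu>pos x unfolding P_def Q_def by auto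
        have "ln (\<rho> x / \<nu> x) = ln 7 + ln (\<rho> x / (7 * \<nu> x))" using pos by (simp add: ln_div ln_mult)
        also have "\<dots> \<le> ln 7 + (\<rho> x / (7 * \<nu> x) - 1)" using pos by (simp add: ln_le_minus_one)
        finally have "\<phi> \<mu> x * ln (\<rho> x / \<nu> x) \<le> \<phi> \<mu> x * (ln 7 + (\<rho> x / (7 * \<nu> x) - 1))"
          using pos by (intro mult_left_mono) auto
        thus ?thesis using pos by (simp add: field_simps)
      qed
      have "(\<Sum>x\<in>Q. \<phi> \<mu> x * ln (\<rho> x / \<nu> x)) \<le> (\<Sum>x\<in>Q. \<phi> \<mu> x * (ln 7 - 1) + (1/7) * (\<rho> x * (\<phi> \<mu> x / \<nu> x)))"
        by (rule sum_mono) (use each in auto)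
      also have "\<dots> = (ln 7 - 1) * (\<Sum>x\<in>Q. \<phi> \<mu> x) + (1/7) * (\<Sum>x\<in>Q. \<rho> x * (\<phi> \<mu> x / \<nu> x))"
      proof -
        have "(\<Sum>x\<in>Q. \<phi> \<mu> x * (ln 7 - 1) + (1/7) * (\<rho> x * (\<phi> \<mu> x / \<nu> x))) =
              (\<Sum>x\<in>Q. (ln 7 - 1) * \<phi> \<mu> x + (1/7) * (\<rho> x * (\<phi> \<mu> x / \<nu> x)))"
          by (rule sum.cong) (auto simp: mult.commute)
        also have "\<dots> = (ln 7 - 1) * (\<Sum>x\<in>Q. \<phi> \<mu> x) + (1/7) * (\<Sum>x\<in>Q. \<rho> x * (\<phi> \<mu> x / \<nu> x))"
          by (simp only: sum.distrib sum_distrib_left)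
        finally show ?thesis .
      qed
      also have "(\<Sum>x\<in>Q. \<phi> \<mu> x) = (\<Sum>x\<in>S. \<phi> \<mu> x)"
        using \<phi>nn[OF \<mu>] finS unfolding Q_def by (intro sum.mono_neutral_left) (auto simp: less_eq_real_def)
      also have "\<dots> = 1" by (rule \<phi>sum[OF \<mu>])
      also have "(\<Sum>x\<in>Q. \<rho> x * (\<phi> \<mu> x / \<nu> x)) \<le> (\<Sum>x\<in>P. \<rho> x * (\<phi> \<mu> x / \<nu> x))"
      proof (rule sum_mono2[OF finP QP])
        fix b assume b: "b \<in> P - Q"
        hence "0 \<le> \<rho> b" "0 \<le> \<phi> \<mu> b" "0 < \<nu> b" using \<rho>nn PS \<phi>nn[OF \<mu>] \<nu>pos by auto
        thus "0 \<le> \<rho> b * (\<phi> \<mu> b / \<nu> b)" by simp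
      qed
      also note SUMB[OF \<mu>]
      finally show "(\<Sum>x\<in>{x\<in>S. 0 < \<phi> \<mu> x}. \<phi> \<mu> x * ln (\<rho> x / \<nu> x)) \<le> ln 7"
        unfolding Q_def[symmetric] by simp
    qed
  qed
  then obtain \<nu> where \<nu>: "isMix C \<phi> \<nu>" "\<forall>x\<in>P. \<nu> x > 0" "\<forall>\<mu>\<in>C. (\<forall>x\<in>S. \<phi> \<mu> x > 0 \<longrightarrow> \<rho> x > 0) \<longrightarrow>
        (\<Sum>x\<in>{x\<in>S. \<phi> \<mu> x > 0}. \<phi> \<mu> x * ln (\<rho> x / \<nu> x)) \<le> ln 7" by blast
  obtain m :: nat and c g where mcg: "\<forall>j<m. g j \<in> C \<and> 0 \<le> c j" "(\<Sum>j<m. c j) = 1" "\<nu> = (\<lambda>x. \<Sum>j<m. c j * \<phi> (g j) x)"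
      using \<nu>(1) by (rule isMixE)
  have A: "\<forall>\<mu>\<in>C. \<forall>x\<in>S. \<phi> \<mu> x > 0 \<and> \<rho> x > 0 \<longrightarrow> (\<Sum>j<m. c j * \<phi> (g j) x) > 0"
    using \<nu>(2) unfolding mcg(3) P_def by auto
  have B: "\<forall>\<mu>\<in>C. (\<forall>x\<in>S. \<phi> \<mu> x > 0 \<longrightarrow> \<rho> x > 0) \<longrightarrow>
        (\<Sum>x\<in>{x\<in>S. \<phi> \<mu> x > 0}. \<phi> \<mu> x * ln (\<rho> x / (\<Sum>j<m. c j * \<phi> (g j) x))) \<le> ln 7"
    using \<nu>(3) unfolding mcg(3) by simp
  show ?thesis using mcg(1,2) A B by blast
qed



definition Cyl :: "'a set \<Rightarrow> 'a list \<Rightarrow> 'a stream set" where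
  "Cyl X xs = {\<omega> \<in> streams X. stake (length xs) \<omega> = xs}"

lemma Cyl_alt: "Cyl X xs = {\<omega> \<in> space (stream_space (count_space X)). \<forall>i<length xs. \<omega> !! i = xs ! i}"
  unfolding Cyl_def space_stream_space space_count_space
  by (auto intro!: nth_equalityI) (metis stake_nth)

lemma Cyl_sets: "set xs \<subseteq> X \<Longrightarrow> Cyl X xs \<in> sets (stream_space (count_space X))"
  unfolding Cyl_alt by measurable

lemma spm_space: "seq_prob_measure X M \<Longrightarrow> space M = streams X"
  unfolding seq_prob_measure_def
  by (metis sets_eq_imp_space_eq space_count_space space_stream_space)

lemma seqprob_Cyl: "seq_prob_measure X M \<Longrightarrow> seqprob M xs = measure M (Cyl X xs)"
  unfolding seqprob_def Cyl_def by (simp add: spm_space)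

lemma Cyl_sets': "seq_prob_measure X M \<Longrightarrow> set xs \<subseteq> X \<Longrightarrow> Cyl X xs \<in> sets M"
  using Cyl_sets unfolding seq_prob_measure_def by auto

lemma emeasure_Cyl: "seq_prob_measure X M \<Longrightarrow> emeasure M (Cyl X xs) = ennreal (seqprob M xs)"
  unfolding seq_prob_measure_def seqprob_Cyl
  by (simp add: finite_measure.emeasure_eq_measure[OF prob_space.finite_measure] seq_prob_measure_def seqprob_Cyl)

lemma seqprob_nonneg: "seqprob M xs \<ge> 0"
  unfolding seqprob_def by simp

lemma seqprob_sum:
  assumes M: "seq_prob_measure X M" and X: "finite X"
  shows "(\<Sum>xs\<in>{xs. set xs \<subseteq> X \<and> length xs = n}. seqprob M xs) = 1"
proof -
  define S where "S = {xs. set xs \<subseteq> X \<and> length xs = n}"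
  have finS: "finite S" unfolding S_def using X by (rule finite_lists_length_eq)
  have U: "(\<Union>xs\<in>S. Cyl X xs) = space M"
  proof
    show "(\<Union>xs\<in>S. Cyl X xs) \<subseteq> space M" using spm_space[OF M] unfolding Cyl_def by auto
    show "space M \<subseteq> (\<Union>xs\<in>S. Cyl X xs)"
    proof
      fix \<omega> assume "\<omega> \<in> space M"
      hence \<omega>: "\<omega> \<in> streams X" using spm_space[OF M] by auto
      have "set (stake n \<omega>) \<subseteq> X"
      proof
        fix a assume "a \<in> set (stake n \<omega>)"
        then obtain i where "i < n" "a = stake n \<omega> ! i" by (auto simp: in_set_conv_nth)
        hence "a = \<omega> !! i" by simp
        thus "a \<in> X" using \<omega> by (simp add: streams_iff_snth)
      qed
      hence "stake n \<omega> \<in> S" unfolding S_def by simp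
      moreover have "\<omega> \<in> Cyl X (stake n \<omega>)" using \<omega> unfolding Cyl_def by simp
      ultimately show "\<omega> \<in> (\<Union>xs\<in>S. Cyl X xs)" by blast
    qed
  qed
  have "measure M (\<Union>xs\<in>S. Cyl X xs) = (\<Sum>xs\<in>S. measure M (Cyl X xs))"
  proof (rule measure_finite_Union[OF finS])
    show "Cyl X ` S \<subseteq> sets M" using Cyl_sets'[OF M] unfolding S_def by auto
    show "disjoint_family_on (Cyl X) S" unfolding disjoint_family_on_def Cyl_def S_def by auto
    show "\<And>i. i \<in> S \<Longrightarrow> emeasure M (Cyl X i) \<noteq> \<infinity>"
      using M unfolding seq_prob_measure_def by (simp add: finite_measure.emeasure_eq_measure[OF prob_space.finite_measure])
  qed
  moreover have "measure M (space M) = 1" using M unfolding seq_prob_measure_def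
    by (simp add: prob_space.prob_space)
  ultimately show ?thesis unfolding S_def[symmetric] using U seqprob_Cyl[OF M] by simp
qed



lemma build_nu:
  fixes C :: "'a stream measure set" and mm :: "nat \<Rightarrow> nat" and cc :: "nat \<Rightarrow> nat \<Rightarrow> real"
    and gg :: "nat \<Rightarrow> nat \<Rightarrow> 'a stream measure"
  assumes C: "\<forall>\<mu>\<in>C. seq_prob_measure X \<mu>" and \<mu>0: "\<mu>0 \<in> C"
  and g: "\<And>n j. j < mm n \<Longrightarrow> gg n j \<in> C \<and> 0 \<le> cc n j" and c1: "\<And>n. (\<Sum>j<mm n. cc n j) = (1::real)"
  shows "\<exists>\<nu>. discrete_bayes X C \<nu> \<and> (\<forall>xs. set xs \<subseteq> X \<longrightarrow>
     seqprob \<nu> xs \<ge> (inverse (real (Suc (length xs))) - inverse (real (Suc (Suc (length xs))))) *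
        (\<Sum>j<mm (length xs). cc (length xs) j * seqprob (gg (length xs) j) xs))"
proof -
  define f :: "nat \<Rightarrow> real" where "f n = inverse (real (Suc n))" for n
  define w where "w n = f n - f (Suc n)" for n
  have f0: "f \<longlonglongrightarrow> 0" unfolding f_def by (rule LIMSEQ_inverse_real_of_nat)
  have wsums: "w sums 1" using telescope_sums'[OF f0] unfolding w_def f_def by simp
  have wnn: "0 \<le> w n" for n unfolding w_def f_def by (simp add: field_simps)
  have wint: "(\<integral>\<^sup>+x. ennreal (w x) \<partial>count_space UNIV) = 1"
    by (simp add: nn_integral_count_space_nat suminf_ennreal_eq[OF wnn wsums])
  define q where "q = embed_pmf w"
  have pq: "pmf q n = w n" for n unfolding q_def by (rule pmf_embed_pmf[OF wnn wint])
  define c' where "c' n j = (if j < mm n then cc n j else 0)" for n j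
  have c'nn: "0 \<le> c' n j" for n j unfolding c'_def using g by auto
  have c'int: "(\<integral>\<^sup>+x. ennreal (c' n x) \<partial>count_space UNIV) = 1" for n
  proof -
    have "(\<integral>\<^sup>+x. ennreal (c' n x) \<partial>count_space UNIV) = (\<Sum>j. ennreal (c' n j))"
      by (simp add: nn_integral_count_space_nat)
    also have "\<dots> = (\<Sum>j<mm n. ennreal (c' n j))"
      by (rule suminf_finite) (auto simp: c'_def)
    also have "\<dots> = ennreal (\<Sum>j<mm n. c' n j)" using c'nn by (simp add: sum_ennreal)
    also have "(\<Sum>j<mm n. c' n j) = 1" using c1[of n] by (simp add: c'_def)
    finally show ?thesis by simp
  qed
  define p where "p n = embed_pmf (c' n)" for n
  have pp: "pmf (p n) j = c' n j" for n j unfolding p_def by (rule pmf_embed_pmf[OF c'nn c'int])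
  have setp: "set_pmf (p n) \<subseteq> {..<mm n}" for n
  proof -
    have "set_pmf (p n) = {j. c' n j \<noteq> 0}" unfolding p_def by (rule set_embed_pmf[OF c'nn c'int])
    thus ?thesis by (auto simp: c'_def split: if_splits)
  qed
  define P where "P = bind_pmf q (\<lambda>n. map_pmf (\<lambda>j. prod_encode (n, j)) (p n))"
  define \<mu>s where "\<mu>s k = (case prod_decode k of (n, j) \<Rightarrow> if j < mm n then gg n j else \<mu>0)" for k
  have \<mu>sC: "\<mu>s k \<in> C" for k unfolding \<mu>s_def using g \<mu>0 by (auto split: prod.splits)
  define N where "N = stream_space (count_space X)"
  define \<nu> where "\<nu> = measure_pmf P \<bind> \<mu>s"
  have A: "measure_pmf P \<in> space (prob_algebra (count_space UNIV))"
    by (simp add: space_prob_algebra prob_space_measure_pmf)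
  have B: "\<mu>s \<in> count_space UNIV \<rightarrow>\<^sub>M prob_algebra N"
    using \<mu>sC C by (auto simp: measurable_count_space_eq1 space_prob_algebra N_def seq_prob_measure_def)
  have spm: "seq_prob_measure X \<nu>"
    unfolding seq_prob_measure_def \<nu>_def N_def[symmetric]
    using prob_space_bind'[OF A B] sets_bind'[OF A B] by simp
  have em: "emeasure \<nu> Y = (\<integral>\<^sup>+k. emeasure (\<mu>s k) Y \<partial>measure_pmf P)" if "Y \<in> sets N" for Y
    unfolding \<nu>_def by (rule emeasure_bind_prob_algebra[OF A B that])
  have db: "discrete_bayes X C \<nu>"
    unfolding discrete_bayes_def
  proof (intro conjI exI[of _ "pmf P"] exI[of _ \<mu>s] allI ballI)
    show "seq_prob_measure X \<nu>" by (rule spm)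
    show "\<mu>s k \<in> C" for k by (rule \<mu>sC)
    show "0 \<le> pmf P k" "pmf P k \<le> 1" for k by (simp_all add: pmf_le_1)
    fix Y assume "Y \<in> sets \<nu>"
    hence Y: "Y \<in> sets N" using spm unfolding seq_prob_measure_def N_def by simp
    show "emeasure \<nu> Y = (\<Sum>k. ennreal (pmf P k) * emeasure (\<mu>s k) Y)"
      unfolding em[OF Y] nn_integral_measure_pmf nn_integral_count_space_nat ..
  qed
  have lb: "seqprob \<nu> xs \<ge> w (length xs) * (\<Sum>j<mm (length xs). cc (length xs) j * seqprob (gg (length xs) j) xs)"
    if xs: "set xs \<subseteq> X" for xs
  proof -
    define n where "n = length xs"
    define Y where "Y = Cyl X xs"
    have Y: "Y \<in> sets N" unfolding Y_def N_def using Cyl_sets[OF xs] .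
    define G where "G n' = (\<integral>\<^sup>+j. emeasure (\<mu>s (prod_encode (n', j))) Y \<partial>measure_pmf (p n'))" for n'
    have "emeasure \<nu> Y = (\<integral>\<^sup>+n'. G n' \<partial>measure_pmf q)"
      unfolding em[OF Y] P_def G_def by simp
    also have "\<dots> \<ge> (\<integral>\<^sup>+n'. G n * indicator {n} n' \<partial>measure_pmf q)"
      by (intro nn_integral_mono) (auto split: split_indicator)
    also have "(\<integral>\<^sup>+n'. G n * indicator {n} n' \<partial>measure_pmf q) = G n * ennreal (w n)"
      by (simp add: nn_integral_cmult_indicator emeasure_pmf_single pq)
    also have "G n = (\<Sum>j\<in>set_pmf (p n). emeasure (\<mu>s (prod_encode (n, j))) Y * pmf (p n) j)"
      unfolding G_def by (rule nn_integral_measure_pmf_finite) (use finite_subset[OF setp[of n]] in auto)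
    also have "\<dots> = (\<Sum>j<mm n. emeasure (\<mu>s (prod_encode (n, j))) Y * pmf (p n) j)"
      by (rule sum.mono_neutral_left) (use setp in \<open>auto simp: set_pmf_eq\<close>)
    also have "\<dots> = (\<Sum>j<mm n. ennreal (cc n j * seqprob (gg n j) xs))"
    proof (rule sum.cong[OF refl])
      fix j assume j: "j \<in> {..<mm n}"
      have "\<mu>s (prod_encode (n, j)) = gg n j" using j unfolding \<mu>s_def by simp
      moreover have "seq_prob_measure X (gg n j)" using g[of j n] j C by auto
      ultimately show "emeasure (\<mu>s (prod_encode (n, j))) Y * pmf (p n) j = ennreal (cc n j * seqprob (gg n j) xs)"
        using j g[of j n] unfolding Y_def
        by (simp add: emeasure_Cyl pp c'_def ennreal_mult' seqprob_nonneg mult.commute)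
    qed
    also have "\<dots> = ennreal (\<Sum>j<mm n. cc n j * seqprob (gg n j) xs)"
      using g by (intro sum_ennreal) (auto simp: seqprob_nonneg)
    finally have "ennreal (w n * (\<Sum>j<mm n. cc n j * seqprob (gg n j) xs)) \<le> emeasure \<nu> Y"
      using wnn by (simp add: ennreal_mult' mult.commute)
    also have "emeasure \<nu> Y = ennreal (seqprob \<nu> xs)" unfolding Y_def by (rule emeasure_Cyl[OF spm])
    finally show ?thesis unfolding n_def by (subst (asm) ennreal_le_iff) (auto simp: seqprob_nonneg)
  qed
  show ?thesis using db lb unfolding w_def f_def by blast
qed



lemma final_ineq:
  fixes \<mu> \<rho> \<nu> mix :: "'s \<Rightarrow> real" and S :: "'s set" and w :: real
  assumes finS: "finite S" and \<mu>nn: "\<And>x. x\<in>S \<Longrightarrow> 0 \<le> \<mu> x" and \<mu>sum: "(\<Sum>x\<in>S. \<mu> x) = 1"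
    and \<rho>nn: "\<And>x. x\<in>S \<Longrightarrow> 0 \<le> \<rho> x"
    and pos: "\<forall>x\<in>S. \<mu> x > 0 \<and> \<rho> x > 0 \<longrightarrow> mix x > 0"
    and bnd: "(\<forall>x\<in>S. \<mu> x > 0 \<longrightarrow> \<rho> x > 0) \<longrightarrow> (\<Sum>x\<in>{x\<in>S. \<mu> x > 0}. \<mu> x * ln (\<rho> x / mix x)) \<le> ln 7"
    and lb: "\<And>x. x\<in>S \<Longrightarrow> \<nu> x \<ge> w * mix x" and w: "w > 0"
  shows "(\<Sum>x\<in>S. kl_term (\<mu> x) (\<nu> x)) \<le> (\<Sum>x\<in>S. kl_term (\<mu> x) (\<rho> x)) + ereal (log 2 7 + log 2 (1/w))"
proof (cases "\<forall>x\<in>S. \<mu> x > 0 \<longrightarrow> \<rho> x > 0")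
  case False
  then obtain x where x: "x \<in> S" "\<mu> x > 0" "\<not> \<rho> x > 0" by auto
  hence "\<rho> x = 0" using \<rho>nn[of x] by auto
  hence "kl_term (\<mu> x) (\<rho> x) = \<infinity>" using x unfolding kl_term_def by auto
  hence "(\<Sum>x\<in>S. kl_term (\<mu> x) (\<rho> x)) = \<infinity>" using finS x(1) by (auto simp: sum_Pinfty)
  thus ?thesis by simp
next
  case True
  define Q where "Q = {x\<in>S. \<mu> x > 0}"
  define h where "h x = (if \<mu> x > 0 then \<mu> x * log 2 (\<rho> x / mix x) + \<mu> x * log 2 (1/w) else 0)" for x
  have each: "kl_term (\<mu> x) (\<nu> x) \<le> kl_term (\<mu> x) (\<rho> x) + ereal (h x)" if x: "x \<in> S" for x
  proof (cases "\<mu> x > 0")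
    case False
    hence "\<mu> x = 0" using \<mu>nn[OF x] by auto
    thus ?thesis unfolding kl_term_def h_def by simp
  next
    case pos\<mu>: True
    have \<rho>p: "\<rho> x > 0" using True x pos\<mu> by auto
    have mp: "mix x > 0" using pos x pos\<mu> \<rho>p by auto
    have wm: "w * mix x > 0" using w mp by simp
    have \<nu>p: "\<nu> x > 0" using lb[OF x] wm by linarith
    have "log 2 (\<mu> x / \<nu> x) \<le> log 2 (\<mu> x / (w * mix x))"
      using lb[OF x] wm pos\<mu> \<nu>p by (simp add: frac_le)
    also have "\<dots> = log 2 (\<mu> x / \<rho> x) + log 2 (\<rho> x / mix x) + log 2 (1/w)"
      using pos\<mu> \<rho>p mp w by (simp add: log_divide log_mult)
    finally have "\<mu> x * log 2 (\<mu> x / \<nu> x) \<le> \<mu> x * (log 2 (\<mu> x / \<rho> x) + log 2 (\<rho> x / mix x) + log 2 (1/w))"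
      using pos\<mu> by (intro mult_left_mono) auto
    thus ?thesis using pos\<mu> \<rho>p \<nu>p unfolding kl_term_def h_def by (simp add: algebra_simps)
  qed
  have "(\<Sum>x\<in>S. kl_term (\<mu> x) (\<nu> x)) \<le> (\<Sum>x\<in>S. kl_term (\<mu> x) (\<rho> x) + ereal (h x))"
    by (rule sum_mono) (rule each)
  also have "\<dots> = (\<Sum>x\<in>S. kl_term (\<mu> x) (\<rho> x)) + ereal (\<Sum>x\<in>S. h x)"
    by (simp add: sum.distrib)
  also have "(\<Sum>x\<in>S. h x) = (\<Sum>x\<in>Q. \<mu> x * log 2 (\<rho> x / mix x) + \<mu> x * log 2 (1/w))"
    unfolding Q_def h_def using finS by (simp add: sum.inter_filter[symmetric])
  also have "\<dots> = (\<Sum>x\<in>Q. \<mu> x * ln (\<rho> x / mix x)) / ln 2 + log 2 (1/w) * (\<Sum>x\<in>Q. \<mu> x)"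
  proof -
    have "(\<Sum>x\<in>Q. \<mu> x * log 2 (\<rho> x / mix x) + \<mu> x * log 2 (1/w)) =
          (\<Sum>x\<in>Q. \<mu> x * log 2 (\<rho> x / mix x)) + (\<Sum>x\<in>Q. \<mu> x) * log 2 (1/w)"
      by (simp only: sum.distrib sum_distrib_right)
    moreover have "(\<Sum>x\<in>Q. \<mu> x * log 2 (\<rho> x / mix x)) = (\<Sum>x\<in>Q. \<mu> x * ln (\<rho> x / mix x)) / ln 2"
      by (simp add: log_def sum_divide_distrib)
    ultimately show ?thesis by simp
  qed
  also have "(\<Sum>x\<in>Q. \<mu> x) = 1"
    unfolding \<mu>sum[symmetric] Q_def using finS \<mu>nn
    by (intro sum.mono_neutral_left) (auto simp: less_eq_real_def)
  also have "(\<Sum>x\<in>Q. \<mu> x * ln (\<rho> x / mix x)) / ln 2 \<le> ln 7 / ln 2"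
    using bnd True unfolding Q_def by (intro divide_right_mono) auto
  also have "ln 7 / ln 2 = log 2 7" by (simp add: log_def)
  finally show ?thesis by (simp add: add_left_mono)
qed

lemma num_bound:
  fixes n :: nat assumes n: "n \<ge> 2"
  shows "log 2 7 + log 2 (1 / (inverse (real (Suc n)) - inverse (real (Suc (Suc n))))) \<le> 8 * log 2 (real n)"
proof -
  have w: "inverse (real (Suc n)) - inverse (real (Suc (Suc n))) = 1 / (real (Suc n) * real (Suc (Suc n)))"
    by (simp add: field_simps)
  have nat_ineq: "7 * (Suc n * Suc (Suc n)) \<le> n ^ 8"
  proof -
    have "Suc n \<le> 2 * n" "Suc (Suc n) \<le> 2 * n" using n by auto
    hence "Suc n * Suc (Suc n) \<le> (2*n) * (2*n)" by (intro mult_le_mono)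
    hence "7 * (Suc n * Suc (Suc n)) \<le> 28 * (n * n)" by simp
    also have "\<dots> \<le> 2^6 * (n * n)" by simp
    also have "2^6 \<le> n^6" using n by (intro power_mono) auto
    hence "2^6 * (n * n) \<le> n^6 * (n * n)" by (intro mult_le_mono1)
    also have "n^6 * (n * n) = n^8" by (simp add: power_def)
    finally show ?thesis by simp
  qed
  hence "real (7 * (Suc n * Suc (Suc n))) \<le> real (n ^ 8)" by (simp only: of_nat_le_iff)
  hence ri: "7 * (real (Suc n) * real (Suc (Suc n))) \<le> real n ^ 8"
    by (simp only: of_nat_mult of_nat_power of_nat_numeral)
  have "log 2 7 + log 2 (1 / (inverse (real (Suc n)) - inverse (real (Suc (Suc n))))) =
        log 2 (7 * (real (Suc n) * real (Suc (Suc n))))"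
    unfolding w by (simp add: log_mult)
  also have "\<dots> \<le> log 2 (real n ^ 8)"
    using ri n by (subst log_le_cancel_iff) auto
  also have "\<dots> = 8 * log 2 (real n)" using n by (simp add: log_nat_power)
  finally show ?thesis .
qed

theorem theorem1:
  shows "\<exists>a b :: real. \<exists>N :: nat. \<forall>(X :: 'a set) C \<rho>.
     finite X \<and> C \<noteq> {} \<and> (\<forall>\<mu>\<in>C. seq_prob_measure X \<mu>) \<and> seq_prob_measure X \<rho> \<longrightarrow>
     (\<exists>\<nu>. discrete_bayes X C \<nu> \<and>
        (\<forall>\<mu>\<in>C. \<forall>n\<ge>N.
           logloss X n \<mu> \<nu> \<le> logloss X n \<mu> \<rho> +
             ereal (8 * log 2 (real n) + (a + b * log 2 (real (card X))) * log 2 (log 2 (real n)))))"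
proof (intro exI[of _ "0::real"] exI[of _ "2::nat"] allI impI)
  fix X :: "'a set" and C :: "'a stream measure set" and \<rho>
  assume H: "finite X \<and> C \<noteq> {} \<and> (\<forall>\<mu>\<in>C. seq_prob_measure X \<mu>) \<and> seq_prob_measure X \<rho>"
  hence finX: "finite X" and Cne: "C \<noteq> {}" and CC: "\<forall>\<mu>\<in>C. seq_prob_measure X \<mu>"
    and \<rho>m: "seq_prob_measure X \<rho>" by auto
  define S where "S n = {xs. set xs \<subseteq> X \<and> length xs = n}" for n
  have ex: "\<exists>m::nat. \<exists>c g. (\<forall>j<m. g j \<in> C \<and> 0 \<le> c j) \<and> (\<Sum>j<m. c j) = 1 \<and>
     (\<forall>\<mu>\<in>C. \<forall>x\<in>S n. seqprob \<mu> x > 0 \<and> seqprob \<rho> x > 0 \<longrightarrow> (\<Sum>j<m. c j * seqprob (g j) x) > 0) \<and>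
     (\<forall>\<mu>\<in>C. (\<forall>x\<in>S n. seqprob \<mu> x > 0 \<longrightarrow> seqprob \<rho> x > 0) \<longrightarrow>
        (\<Sum>x\<in>{x\<in>S n. seqprob \<mu> x > 0}. seqprob \<mu> x * ln (seqprob \<rho> x / (\<Sum>j<m. c j * seqprob (g j) x))) \<le> ln 7)"
    for n
  proof (rule mixture_exists)
    show "finite (S n)" unfolding S_def using finX by (rule finite_lists_length_eq)
    show "C \<noteq> {}" by (rule Cne)
    show "\<And>\<mu> x. \<mu> \<in> C \<Longrightarrow> x \<in> S n \<Longrightarrow> 0 \<le> seqprob \<mu> x" by (rule seqprob_nonneg)
    show "\<And>\<mu>. \<mu> \<in> C \<Longrightarrow> (\<Sum>x\<in>S n. seqprob \<mu> x) = 1"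
      unfolding S_def using CC finX by (auto intro: seqprob_sum)
    show "\<And>x. x \<in> S n \<Longrightarrow> 0 \<le> seqprob \<rho> x" by (rule seqprob_nonneg)
    show "(\<Sum>x\<in>S n. seqprob \<rho> x) \<le> 1" unfolding S_def using seqprob_sum[OF \<rho>m finX] by simp
  qed
  define Good where "Good n m c g \<longleftrightarrow> (\<forall>j<m. g j \<in> C \<and> 0 \<le> c j) \<and> (\<Sum>j<m. c j) = 1 \<and>
     (\<forall>\<mu>\<in>C. \<forall>x\<in>S n. seqprob \<mu> x > 0 \<and> seqprob \<rho> x > 0 \<longrightarrow> (\<Sum>j<m. c j * seqprob (g j) x) > 0) \<and>
     (\<forall>\<mu>\<in>C. (\<forall>x\<in>S n. seqprob \<mu> x > 0 \<longrightarrow> seqprob \<rho> x > 0) \<longrightarrow>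
        (\<Sum>x\<in>{x\<in>S n. seqprob \<mu> x > 0}. seqprob \<mu> x * ln (seqprob \<rho> x / (\<Sum>j<m. c j * seqprob (g j) x))) \<le> ln 7)" for n and m :: nat and c :: "nat \<Rightarrow> real" and g :: "nat \<Rightarrow> 'a stream measure"
  have "\<forall>n. \<exists>t. Good n (fst t) (fst (snd t)) (snd (snd t))"
  proof
    fix n
    obtain m :: nat and c g where "Good n m c g" using ex[of n] unfolding Good_def by blast
    thus "\<exists>t. Good n (fst t) (fst (snd t)) (snd (snd t))" by (intro exI[of _ "(m, c, g)"]) simp
  qed
  then obtain T where T: "\<forall>n. Good n (fst (T n)) (fst (snd (T n))) (snd (snd (T n)))" by (rule choice[THEN exE])
  define mm where "mm n = fst (T n)" for n
  define cc where "cc n = fst (snd (T n))" for n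
  define gg where "gg n = snd (snd (T n))" for n
  have MM: "Good n (mm n) (cc n) (gg n)" for n using T unfolding mm_def cc_def gg_def by blast
  hence MM: "\<And>n. (\<forall>j<mm n. gg n j \<in> C \<and> 0 \<le> cc n j) \<and> (\<Sum>j<mm n. cc n j) = 1 \<and>
     (\<forall>\<mu>\<in>C. \<forall>x\<in>S n. seqprob \<mu> x > 0 \<and> seqprob \<rho> x > 0 \<longrightarrow> (\<Sum>j<mm n. cc n j * seqprob (gg n j) x) > 0) \<and>
     (\<forall>\<mu>\<in>C. (\<forall>x\<in>S n. seqprob \<mu> x > 0 \<longrightarrow> seqprob \<rho> x > 0) \<longrightarrow>
        (\<Sum>x\<in>{x\<in>S n. seqprob \<mu> x > 0}. seqprob \<mu> x * ln (seqprob \<rho> x / (\<Sum>j<mm n. cc n j * seqprob (gg n j) x))) \<le> ln 7)"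
    unfolding Good_def by blast
  obtain \<mu>0 where \<mu>0: "\<mu>0 \<in> C" using Cne by auto
  obtain \<nu> where \<nu>: "discrete_bayes X C \<nu>" and lbd: "\<forall>xs. set xs \<subseteq> X \<longrightarrow>
     seqprob \<nu> xs \<ge> (inverse (real (Suc (length xs))) - inverse (real (Suc (Suc (length xs))))) *
        (\<Sum>j<mm (length xs). cc (length xs) j * seqprob (gg (length xs) j) xs)"
    using build_nu[OF CC \<mu>0, of mm gg cc] MM by blast
  show "\<exists>\<nu>. discrete_bayes X C \<nu> \<and>
        (\<forall>\<mu>\<in>C. \<forall>n\<ge>2. logloss X n \<mu> \<nu> \<le> logloss X n \<mu> \<rho> +
             ereal (8 * log 2 (real n) + (0 + 0 * log 2 (real (card X))) * log 2 (log 2 (real n))))"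
  proof (intro exI[of _ \<nu>] conjI ballI allI impI)
    show "discrete_bayes X C \<nu>" by (rule \<nu>)
    fix \<mu> and n :: nat assume \<mu>: "\<mu> \<in> C" and n: "2 \<le> n"
    define w where "w = inverse (real (Suc n)) - inverse (real (Suc (Suc n)))"
    have "inverse (real (Suc (Suc n))) < inverse (real (Suc n))"
      by (rule less_imp_inverse_less) simp_all
    hence wpos: "w > 0" unfolding w_def by simp
    have "logloss X n \<mu> \<nu> \<le> logloss X n \<mu> \<rho> + ereal (log 2 7 + log 2 (1/w))"
      unfolding logloss_def S_def[symmetric]
    proof (rule final_ineq)
      show "finite (S n)" unfolding S_def using finX by (rule finite_lists_length_eq)
      show "\<And>x. x \<in> S n \<Longrightarrow> 0 \<le> seqprob \<mu> x" by (rule seqprob_nonneg)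
      show "(\<Sum>x\<in>S n. seqprob \<mu> x) = 1" unfolding S_def using CC \<mu> finX by (auto intro: seqprob_sum)
      show "\<And>x. x \<in> S n \<Longrightarrow> 0 \<le> seqprob \<rho> x" by (rule seqprob_nonneg)
      show "\<forall>x\<in>S n. seqprob \<mu> x > 0 \<and> seqprob \<rho> x > 0 \<longrightarrow> (\<Sum>j<mm n. cc n j * seqprob (gg n j) x) > 0"
        using MM[of n] \<mu> by blast
      show "(\<forall>x\<in>S n. seqprob \<mu> x > 0 \<longrightarrow> seqprob \<rho> x > 0) \<longrightarrow>
        (\<Sum>x\<in>{x\<in>S n. seqprob \<mu> x > 0}. seqprob \<mu> x * ln (seqprob \<rho> x / (\<Sum>j<mm n. cc n j * seqprob (gg n j) x))) \<le> ln 7"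
        using MM[of n] \<mu> by blast
      show "\<And>x. x \<in> S n \<Longrightarrow> seqprob \<nu> x \<ge> w * (\<Sum>j<mm n. cc n j * seqprob (gg n j) x)"
        using lbd unfolding S_def w_def by auto
      show "w > 0" by (rule wpos)
    qed
    also have "\<dots> \<le> logloss X n \<mu> \<rho> + ereal (8 * log 2 (real n))"
      using num_bound[OF n] unfolding w_def by (intro add_left_mono) simp
    finally show "logloss X n \<mu> \<nu> \<le> logloss X n \<mu> \<rho> +
             ereal (8 * log 2 (real n) + (0 + 0 * log 2 (real (card X))) * log 2 (log 2 (real n)))" by simp
  qed
qed


end
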